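(* There is an absolute constant $C>0$ such that the following holds. Let $n\ge 1$, let $r=r_n\ge 4^{n/5}$, and let $\sigma$ be the map built from $f_r$ as in the context. Let $P=(Q,Q')\in A_{j,k,\sigma}$ for some integers $j,k$. Then $\rho_{P,\sigma}:=\int_0^{2\pi}|\mathrm{Proj}_\theta(\sigma_\theta(Q))\cap\mathrm{Proj}_\theta(\sigma_\theta(Q'))|\,d\theta\le C\,4^{k-2n}$.
   Context: Middle-half Cantor set: $\mathcal{C}_0=[0,1]$ and $\mathcal{C}_{n+1}$ is obtained from $\mathcal{C}_n$ by replacing each of its intervals by the first and last quarters of that interval; $\mathcal{K}_n:=\mathcal{C}_n\times\mathcal{C}_n$ is the union of $4^n$ squares ("Cantor squares") of side $4^{-n}$. For $r>0$, $f_r(y):=r-\sqrt{r^2-y^2}$ if $|y|\le2$ and $f_r(y):=r-\sqrt{r^2-4}$ otherwise; $\sigma_0(x,y):=(x-f_r(y),y)$; $R_\theta$ is clockwise rotation by $\theta$; $\sigma_\theta:=R_{-\theta}\circ\sigma_0\circ R_\theta$ and $\sigma(z,e^{i\theta}):=\sigma_\theta(z)$. $\mathrm{Proj}_\theta$ is orthogonal projection onto the line through the origin in direction $e^{i\theta}$ and $|\cdot|$ is one-dimensional Lebesgue measure. In the rotated coordinates $(x,y)$ whose positive $x$-axis makes angle $\arctan(1/2)$ with the standard $x$-axis, $A_{j,k,\sigma}$ is the set of pairs $(Q,Q')$ of Cantor squares such that for some $\theta$ the images $\sigma_\theta(q)=(x_1,y_1)$, $\sigma_\theta(q')=(x_2,y_2)$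 of their centers satisfy $4^{-k-1}\le|y_1-y_2|\le 4^{-k}$ and $4^{-j-1}\le\left|\frac{x_1-x_2}{y_1-y_2}\right|\le 4^{-j}$. *)

theory Defs
  imports "HOL-Analysis.Analysis"
begin

fun cantor_intervals :: "nat \<Rightarrow> (real \<times> real) set" where
  "cantor_intervals 0 = {(0, 1)}"
| "cantor_intervals (Suc n) =
     (\<Union>(a, b)\<in>cantor_intervals n. {(a, a + (b - a) / 4), (b - (b - a) / 4, b)})"

definition sq :: "real \<Rightarrow> real \<Rightarrow> real \<Rightarrow> real \<Rightarrow> complex set" where
  "sq a b c d = {z. Re z \<in> {a..b} \<and> Im z \<in> {c..d}}"

text \<open>Points of the plane are given in standard coordinates; rc maps a point to its
  coordinates in the rotated system whose positive x-axis makes angle arctan(1/2) with the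
  standard x-axis.\<close>
definition rc :: "complex \<Rightarrow> complex" where
  "rc z = cis (- arctan (1/2)) * z"

definition f_r :: "real \<Rightarrow> real \<Rightarrow> real" where
  "f_r r y = (if \<bar>y\<bar> \<le> 2 then r - sqrt (r\<^sup>2 - y\<^sup>2) else r - sqrt (r\<^sup>2 - 4))"

definition sigma0 :: "real \<Rightarrow> complex \<Rightarrow> complex" where
  "sigma0 r z = Complex (Re z - f_r r (Im z)) (Im z)"

text \<open>R_theta (clockwise rotation by theta) is z \<mapsto> cis(-theta) z; 
  sigma_theta = R_{-theta} o sigma_0 o R_theta.\<close>
definition sigma :: "real \<Rightarrow> real \<Rightarrow> complex \<Rightarrow> complex" where
  "sigma r \<theta> z = cis \<theta> * sigma0 r (cis (- \<theta>) * z)"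

text \<open>Proj_theta(S), expressed in the arclength coordinate t of the line {t e^{i theta}}.\<close>
definition proj_coord :: "real \<Rightarrow> complex set \<Rightarrow> real set" where
  "proj_coord \<theta> S = (\<lambda>z. Re (cis (- \<theta>) * z)) ` S"

definition A_set :: "nat \<Rightarrow> real \<Rightarrow> int \<Rightarrow> int \<Rightarrow> (complex set \<times> complex set) set" where
  "A_set n r j k = {(Q, Q') | Q Q'. \<exists>a b c d a' b' c' d'.
      (a, b) \<in> cantor_intervals n \<and> (c, d) \<in> cantor_intervals n \<and>
      (a', b') \<in> cantor_intervals n \<and> (c', d') \<in> cantor_intervals n \<and>
      Q = sq a b c d \<and> Q' = sq a' b' c' d' \<and>
      (\<exists>\<theta>. let w1 = sigma r \<theta> (rc (Complex ((a + b) / 2) ((c + d) / 2)));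
               w2 = sigma r \<theta> (rc (Complex ((a' + b') / 2) ((c' + d') / 2)))
           in 4 powr (- real_of_int k - 1) \<le> \<bar>Im w1 - Im w2\<bar> \<and>
              \<bar>Im w1 - Im w2\<bar> \<le> 4 powr (- real_of_int k) \<and>
              4 powr (- real_of_int j - 1) \<le> \<bar>(Re w1 - Re w2) / (Im w1 - Im w2)\<bar> \<and>
              \<bar>(Re w1 - Re w2) / (Im w1 - Im w2)\<bar> \<le> 4 powr (- real_of_int j))}"

definition rho :: "real \<Rightarrow> complex set \<Rightarrow> complex set \<Rightarrow> ennreal" where
  "rho r Q Q' = (\<integral>\<^sup>+ \<theta>. indicator {0..2*pi} \<theta> *
      emeasure lebesgue (proj_coord \<theta> (sigma r \<theta> ` rc ` Q) \<inter>
                         proj_coord \<theta> (sigma r \<theta> ` rc ` Q')) \<partial>lborel)"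

end

theory Submission
  imports Defs
begin

lemma cantor_props: "(a,b) \<in> cantor_intervals n \<Longrightarrow> 0 \<le> a \<and> b \<le> 1 \<and> b - a = (1/4::real)^n"
proof (induction n arbitrary: a b)
  case 0 then show ?case by simp
next
  case (Suc n)
  then obtain a0 b0 where h: "(a0,b0) \<in> cantor_intervals n"
    and ab: "(a,b) = (a0, a0 + (b0-a0)/4) \<or> (a,b) = (b0 - (b0-a0)/4, b0)" by auto
  from Suc.IH[OF h] have "0 \<le> a0" "b0 \<le> 1" "b0 - a0 = (1/4)^n" by auto
  define s where "s = (1/4::real)^n"
  have s0: "s \<ge> 0" unfolding s_def by simp
  have sS: "(1/4::real)^Suc n = s/4" unfolding s_def by simp
  have "0 \<le> a0" "b0 \<le> 1" "b0 - a0 = s" using Suc.IH[OF h] s_def by auto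
  then have ab0: "a0 \<le> b0" using s0 by linarith
  from ab show ?case
  proof
    assume "(a, b) = (a0, a0 + (b0 - a0) / 4)"
    then have "a = a0" "b = a0 + (b0 - a0) / 4" by auto
    then show ?thesis using \<open>0 \<le> a0\<close> \<open>b0 \<le> 1\<close> ab0 \<open>b0 - a0 = s\<close> sS by simp
  next
    assume "(a, b) = (b0 - (b0 - a0) / 4, b0)"
    then have "b = b0" "a = b0 - (b0 - a0) / 4" by auto
    then show ?thesis using \<open>0 \<le> a0\<close> \<open>b0 \<le> 1\<close> ab0 \<open>b0 - a0 = s\<close> sS by simp
  qed
qed

definition P :: "real \<Rightarrow> real \<Rightarrow> complex \<Rightarrow> real" where
  "P r \<theta> z = Re (cis (-\<theta>) * z) - f_r r (Im (cis (-\<theta>) * z))"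

lemma proj_sigma: "proj_coord \<theta> (sigma r \<theta> ` Z) = P r \<theta> ` Z"
proof -
  have c1: "cis (-\<theta>) * cis \<theta> = 1" by (simp add: cis_mult)
  have e: "cis (-\<theta>) * (cis \<theta> * w) = w" for w
    by (simp only: mult.assoc[symmetric] c1 mult_1)
  show ?thesis unfolding proj_coord_def sigma_def image_image
    by (simp only: e) (simp add: sigma0_def P_def)
qed

definition g :: "real \<Rightarrow> real \<Rightarrow> real" where "g r y = r - sqrt (r\<^sup>2 - y\<^sup>2)"

lemma fr_g: "\<bar>y\<bar> \<le> 2 \<Longrightarrow> f_r r y = g r y" by (simp add: f_r_def g_def)

lemma fr_bounds: assumes "r > 0" "\<bar>y\<bar> \<le> 2" shows "0 \<le> f_r r y \<and> f_r r y \<le> 4"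
proof (cases "y\<^sup>2 \<le> r\<^sup>2")
  case True
  have "sqrt (r\<^sup>2 - y\<^sup>2) \<le> sqrt (r\<^sup>2)" by (rule real_sqrt_le_mono) simp
  moreover have "sqrt (r\<^sup>2) = r" using assms by simp
  ultimately have a: "sqrt (r\<^sup>2 - y\<^sup>2) \<le> r" by linarith
  have ry: "\<bar>y\<bar> \<le> r" using real_sqrt_le_mono[OF True] assms by simp
  have "\<bar>y\<bar> * \<bar>y\<bar> \<le> r * \<bar>y\<bar>" using ry by (intro mult_right_mono) auto
  then have hy: "y\<^sup>2 \<le> r * \<bar>y\<bar>" by (simp add: power2_eq_square)
  have "(r - \<bar>y\<bar>)\<^sup>2 = r\<^sup>2 + y\<^sup>2 - 2 * r * \<bar>y\<bar>" by (simp add: power2_diff)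
  then have "(r - \<bar>y\<bar>)\<^sup>2 \<le> r\<^sup>2 - y\<^sup>2" using hy by linarith
  then have "sqrt ((r - \<bar>y\<bar>)\<^sup>2) \<le> sqrt (r\<^sup>2 - y\<^sup>2)" by (rule real_sqrt_le_mono)
  then have "r - \<bar>y\<bar> \<le> sqrt (r\<^sup>2 - y\<^sup>2)" using ry by simp
  then show ?thesis using a assms by (simp add: f_r_def)
next
  case False
  then have "sqrt (r\<^sup>2 - y\<^sup>2) = - sqrt (y\<^sup>2 - r\<^sup>2)" by (simp add: real_sqrt_minus[symmetric])
  moreover have "sqrt (y\<^sup>2 - r\<^sup>2) \<le> sqrt (y\<^sup>2)" by (rule real_sqrt_le_mono) (use assms in simp)
  moreover have "sqrt (y\<^sup>2) = \<bar>y\<bar>" by simp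
  moreover have "0 \<le> sqrt (y\<^sup>2 - r\<^sup>2)" using False by simp
  moreover have "r \<le> \<bar>y\<bar>" using real_sqrt_le_mono[of "r\<^sup>2" "y\<^sup>2"] False assms by simp
  ultimately show ?thesis using assms unfolding f_r_def by auto
qed

lemma lip_from_deriv:
  fixes f f' :: "real \<Rightarrow> real"
  assumes d: "\<And>x. x \<in> {a..b} \<Longrightarrow> (f has_real_derivative f' x) (at x)"
    and bd: "\<And>x. x \<in> {a..b} \<Longrightarrow> \<bar>f' x\<bar> \<le> B"
    and x: "x \<in> {a..b}" and y: "y \<in> {a..b}"
  shows "\<bar>f x - f y\<bar> \<le> B * \<bar>x - y\<bar>"
proof -
  have *: "\<bar>f v - f u\<bar> \<le> B * \<bar>v - u\<bar>" if "u \<in> {a..b}" "v \<in> {a..b}" "u < v" for u v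
  proof -
    have dd: "\<And>x. u \<le> x \<Longrightarrow> x \<le> v \<Longrightarrow> (f has_real_derivative f' x) (at x)"
      using d that by auto
    obtain z where z: "u < z" "z < v" "f v - f u = (v - u) * f' z"
      using MVT2[OF \<open>u < v\<close> dd] by blast
    have "z \<in> {a..b}" using z that by auto
    then have "\<bar>f' z\<bar> \<le> B" by (rule bd)
    then show ?thesis using z that by (simp add: abs_mult mult.commute mult_right_mono)
  qed
  consider "x < y" | "x = y" | "y < x" by linarith
  then show ?thesis
  proof cases
    case 1 then show ?thesis using *[OF x y] by (simp add: abs_minus_commute)
  next
    case 2 then show ?thesis by simp
  next
    case 3 then show ?thesis using *[OF y x] by simp
  qed
qed

lemma sqrt_big: assumes "r \<ge> 64" "\<bar>y\<bar> \<le> 2" shows "sqrt (r\<^sup>2 - y\<^sup>2) \<ge> r/2"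
proof -
  have "y\<^sup>2 \<le> 4" using power_mono[of "\<bar>y\<bar>" 2 2] assms by simp
  moreover have "r*r \<ge> 64*64" using assms by (intro mult_mono) auto
  ultimately have "(r/2)\<^sup>2 \<le> r\<^sup>2 - y\<^sup>2" by (simp add: power2_eq_square)
  then have "sqrt ((r/2)\<^sup>2) \<le> sqrt (r\<^sup>2 - y\<^sup>2)" by (rule real_sqrt_le_mono)
  then show ?thesis using assms by simp
qed

lemma g_deriv: assumes "r \<ge> 64" "\<bar>y\<bar> \<le> 2"
  shows "(g r has_real_derivative y / sqrt (r\<^sup>2 - y\<^sup>2)) (at y)"
proof -
  have "sqrt (r\<^sup>2 - y\<^sup>2) > 0" using sqrt_big[OF assms] assms by linarith
  then have pos: "r\<^sup>2 - y\<^sup>2 > 0" by simp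
  have d1: "((\<lambda>y. r\<^sup>2 - y\<^sup>2) has_real_derivative -(2*y)) (at y)"
    by (auto intro!: derivative_eq_intros)
  have d2: "((\<lambda>y. sqrt (r\<^sup>2 - y\<^sup>2)) has_real_derivative (inverse (sqrt (r\<^sup>2 - y\<^sup>2)) / 2) * (-(2*y))) (at y)"
    by (rule DERIV_chain2[OF DERIV_real_sqrt[OF pos] d1])
  have d3: "((\<lambda>y. r - sqrt (r\<^sup>2 - y\<^sup>2)) has_real_derivative 0 - (inverse (sqrt (r\<^sup>2 - y\<^sup>2)) / 2) * (-(2*y))) (at y)"
    by (rule DERIV_diff[OF DERIV_const d2])
  have eq: "0 - (inverse (sqrt (r\<^sup>2 - y\<^sup>2)) / 2) * (-(2*y)) = y / sqrt (r\<^sup>2 - y\<^sup>2)"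
    by (simp add: field_simps)
  show ?thesis using d3 unfolding eq g_def[abs_def] .
qed

lemma gp_bound: assumes "r \<ge> 64" "\<bar>y\<bar> \<le> 2" shows "\<bar>y / sqrt (r\<^sup>2 - y\<^sup>2)\<bar> \<le> 1/16"
proof -
  have S: "sqrt (r\<^sup>2 - y\<^sup>2) \<ge> r/2" by (rule sqrt_big[OF assms])
  then have Sp: "sqrt (r\<^sup>2 - y\<^sup>2) > 0" using assms by linarith
  have "\<bar>y / sqrt (r\<^sup>2 - y\<^sup>2)\<bar> = \<bar>y\<bar> / sqrt (r\<^sup>2 - y\<^sup>2)" using Sp by (simp add: abs_div)
  also have "\<dots> \<le> 2 / (r/2)" using S Sp assms
    by (intro frac_le) auto
  also have "\<dots> \<le> 1/16" using assms by (simp add: field_simps)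
  finally show ?thesis .
qed

lemma g_lip: assumes "r \<ge> 64" "\<bar>y\<bar> \<le> 2" "\<bar>y'\<bar> \<le> 2"
  shows "\<bar>g r y - g r y'\<bar> \<le> \<bar>y - y'\<bar> / 16"
proof -
  have "\<bar>g r y - g r y'\<bar> \<le> 1/16 * \<bar>y - y'\<bar>"
  proof (rule lip_from_deriv[of "-2" 2 "g r" "\<lambda>y. y / sqrt (r\<^sup>2 - y\<^sup>2)"])
    fix x :: real assume "x \<in> {-2..2}"
    then have x: "\<bar>x\<bar> \<le> 2" by auto
    show "(g r has_real_derivative x / sqrt (r\<^sup>2 - x\<^sup>2)) (at x)" by (rule g_deriv[OF assms(1) x])
    show "\<bar>x / sqrt (r\<^sup>2 - x\<^sup>2)\<bar> \<le> 1/16" by (rule gp_bound[OF assms(1) x])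
  qed (use assms in auto)
  then show ?thesis by simp
qed

lemma gp_deriv: assumes "r \<ge> 64" "\<bar>y\<bar> \<le> 2"
  shows "((\<lambda>y. y / sqrt (r\<^sup>2 - y\<^sup>2)) has_real_derivative r\<^sup>2 / (sqrt (r\<^sup>2 - y\<^sup>2))^3) (at y)"
proof -
  have S: "sqrt (r\<^sup>2 - y\<^sup>2) > 0" using sqrt_big[OF assms] assms by linarith
  then have pos: "r\<^sup>2 - y\<^sup>2 > 0" by simp
  have sq: "(sqrt (r\<^sup>2 - y\<^sup>2))\<^sup>2 = r\<^sup>2 - y\<^sup>2" using pos by simp
  have d1: "((\<lambda>y. r\<^sup>2 - y\<^sup>2) has_real_derivative -(2*y)) (at y)"
    by (auto intro!: derivative_eq_intros)
  have d2: "((\<lambda>y. sqrt (r\<^sup>2 - y\<^sup>2)) has_real_derivative (inverse (sqrt (r\<^sup>2 - y\<^sup>2)) / 2) * (-(2*y))) (at y)"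
    by (rule DERIV_chain2[OF DERIV_real_sqrt[OF pos] d1])
  have d3: "((\<lambda>y. y / sqrt (r\<^sup>2 - y\<^sup>2)) has_real_derivative
     (1 * sqrt (r\<^sup>2 - y\<^sup>2) - y * ((inverse (sqrt (r\<^sup>2 - y\<^sup>2)) / 2) * (-(2*y)))) / (sqrt (r\<^sup>2 - y\<^sup>2) * sqrt (r\<^sup>2 - y\<^sup>2))) (at y)"
    by (rule DERIV_divide[OF DERIV_ident d2]) (use S in simp)
  have eq: "(1 * sqrt (r\<^sup>2 - y\<^sup>2) - y * ((inverse (sqrt (r\<^sup>2 - y\<^sup>2)) / 2) * (-(2*y)))) / (sqrt (r\<^sup>2 - y\<^sup>2) * sqrt (r\<^sup>2 - y\<^sup>2))
     = r\<^sup>2 / (sqrt (r\<^sup>2 - y\<^sup>2))^3"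
  proof -
    define T where "T = sqrt (r\<^sup>2 - y\<^sup>2)"
    have T: "T > 0" "T * T = r\<^sup>2 - y\<^sup>2" using S sq unfolding T_def by (auto simp: power2_eq_square)
    have "(1 * T - y * ((inverse T / 2) * (-(2*y)))) / (T * T) = (T*T + y*y) / (T * (T*T))"
      using T(1) by (simp add: field_simps)
    also have "\<dots> = r\<^sup>2 / T^3" using T by (simp add: power3_eq_cube power2_eq_square)
    finally show ?thesis unfolding T_def .
  qed
  show ?thesis using d3 unfolding eq .
qed

lemma gpp_bound: assumes "r \<ge> 64" "\<bar>y\<bar> \<le> 2" shows "\<bar>r\<^sup>2 / (sqrt (r\<^sup>2 - y\<^sup>2))^3\<bar> \<le> 1/8"
proof -
  define S where "S = sqrt (r\<^sup>2 - y\<^sup>2)"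
  have S: "S \<ge> r/2" unfolding S_def by (rule sqrt_big[OF assms])
  have Sp: "S > 0" using S assms by linarith
  have "(r/2)^3 \<le> S^3" using S assms by (intro power_mono) auto
  then have "r^3 \<le> 8 * S^3" by (simp add: power_divide)
  moreover have "r^3 = r * r\<^sup>2" by (simp add: power2_eq_square power3_eq_cube)
  ultimately have "r * r\<^sup>2 \<le> 8 * S^3" by simp
  moreover have "64 * r\<^sup>2 \<le> r * r\<^sup>2" using assms by (intro mult_right_mono) auto
  ultimately have "8 * r\<^sup>2 \<le> S^3" by linarith
  then have "r\<^sup>2 / S^3 \<le> 1/8" using Sp by (simp add: field_simps)
  then show ?thesis using Sp unfolding S_def[symmetric] by simp
qed

lemma gp_lip: assumes "r \<ge> 64" "\<bar>y\<bar> \<le> 2" "\<bar>y'\<bar> \<le> 2"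
  shows "\<bar>y / sqrt (r\<^sup>2 - y\<^sup>2) - y' / sqrt (r\<^sup>2 - y'\<^sup>2)\<bar> \<le> \<bar>y - y'\<bar> / 8"
proof -
  have "\<bar>y / sqrt (r\<^sup>2 - y\<^sup>2) - y' / sqrt (r\<^sup>2 - y'\<^sup>2)\<bar> \<le> 1/8 * \<bar>y - y'\<bar>"
  proof (rule lip_from_deriv[of "-2" 2 "\<lambda>y. y / sqrt (r\<^sup>2 - y\<^sup>2)" "\<lambda>y. r\<^sup>2 / (sqrt (r\<^sup>2 - y\<^sup>2))^3"])
    fix x :: real assume "x \<in> {-2..2}"
    then have x: "\<bar>x\<bar> \<le> 2" by auto
    show "((\<lambda>y. y / sqrt (r\<^sup>2 - y\<^sup>2)) has_real_derivative r\<^sup>2 / (sqrt (r\<^sup>2 - x\<^sup>2))^3) (at x)"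
      by (rule gp_deriv[OF assms(1) x])
    show "\<bar>r\<^sup>2 / (sqrt (r\<^sup>2 - x\<^sup>2))^3\<bar> \<le> 1/8" by (rule gpp_bound[OF assms(1) x])
  qed (use assms in auto)
  then show ?thesis by simp
qed

lemma reX: "Re (cis (-\<theta>) * z) = Re z * cos \<theta> + Im z * sin \<theta>" by (simp add: cis.sel)
lemma imY: "Im (cis (-\<theta>) * z) = Im z * cos \<theta> - Re z * sin \<theta>" by (simp add: cis.sel)
lemma reX_bd: "\<bar>Re (cis (-\<theta>) * z)\<bar> \<le> cmod z"
  by (metis abs_Re_le_cmod mult_cancel_right1 norm_cis norm_mult)
lemma imY_bd: "\<bar>Im (cis (-\<theta>) * z)\<bar> \<le> cmod z"
  by (metis abs_Im_le_cmod mult_cancel_right1 norm_cis norm_mult)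

definition gp :: "real \<Rightarrow> real \<Rightarrow> real" where "gp r y = y / sqrt (r\<^sup>2 - y\<^sup>2)"

lemma P_g: assumes "cmod z \<le> 3/2"
  shows "P r \<theta> z = Re (cis (-\<theta>) * z) - g r (Im (cis (-\<theta>) * z))"
proof -
  have "\<bar>Im (cis (-\<theta>) * z)\<bar> \<le> 2" using imY_bd[of \<theta> z] assms by linarith
  then show ?thesis unfolding P_def by (simp add: fr_g)
qed

lemma P_lip: assumes "r \<ge> 64" "cmod z \<le> 3/2" "cmod z' \<le> 3/2"
  shows "\<bar>P r \<theta> z - P r \<theta> z'\<bar> \<le> 17/16 * cmod (z - z')"
proof -
  have e1: "Re (cis (-\<theta>) * z) - Re (cis (-\<theta>) * z') = Re (cis (-\<theta>) * (z - z'))"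
    by (simp add: algebra_simps)
  have e2: "Im (cis (-\<theta>) * z) - Im (cis (-\<theta>) * z') = Im (cis (-\<theta>) * (z - z'))"
    by (simp add: algebra_simps)
  have y1: "\<bar>Im (cis (-\<theta>) * z)\<bar> \<le> 2" using imY_bd[of \<theta> z] assms by linarith
  have y2: "\<bar>Im (cis (-\<theta>) * z')\<bar> \<le> 2" using imY_bd[of \<theta> z'] assms by linarith
  have "\<bar>g r (Im (cis (-\<theta>) * z)) - g r (Im (cis (-\<theta>) * z'))\<bar> \<le> \<bar>Im (cis (-\<theta>) * (z - z'))\<bar> / 16"
    using g_lip[OF assms(1) y1 y2] e2 by simp
  also have "\<dots> \<le> cmod (z - z') / 16" using imY_bd[of \<theta> "z - z'"] by simp
  finally have gg: "\<bar>g r (Im (cis (-\<theta>) * z)) - g r (Im (cis (-\<theta>) * z'))\<bar> \<le> cmod (z - z') / 16" .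
  have rr: "\<bar>Re (cis (-\<theta>) * z) - Re (cis (-\<theta>) * z')\<bar> \<le> cmod (z - z')" using e1 reX_bd by metis
  show ?thesis unfolding P_g[OF assms(2)] P_g[OF assms(3)] using gg rr by linarith
qed

lemma P_deriv: assumes "r \<ge> 64" "cmod z \<le> 3/2"
  shows "((\<lambda>\<theta>. P r \<theta> z) has_real_derivative
     (Im (cis (-\<theta>) * z) + gp r (Im (cis (-\<theta>) * z)) * Re (cis (-\<theta>) * z))) (at \<theta>)"
proof -
  have feq: "(\<lambda>\<theta>. P r \<theta> z) = (\<lambda>\<theta>. (Re z * cos \<theta> + Im z * sin \<theta>) - g r (Im z * cos \<theta> - Re z * sin \<theta>))"
    by (rule ext) (simp add: P_g[OF assms(2)] reX imY mult.commute)
  have y0: "\<bar>Im (cis (-\<theta>) * z)\<bar> \<le> 2" using imY_bd[of \<theta> z] assms by linarith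
  have y: "\<bar>Im z * cos \<theta> - Re z * sin \<theta>\<bar> \<le> 2" using y0 unfolding imY .
  have dX: "((\<lambda>\<theta>. Re z * cos \<theta> + Im z * sin \<theta>) has_real_derivative (- (Re z * sin \<theta>) + Im z * cos \<theta>)) (at \<theta>)"
    by (auto intro!: derivative_eq_intros)
  have dY: "((\<lambda>\<theta>. Im z * cos \<theta> - Re z * sin \<theta>) has_real_derivative (- (Im z * sin \<theta>) - Re z * cos \<theta>)) (at \<theta>)"
    by (auto intro!: derivative_eq_intros)
  have dG: "((\<lambda>\<theta>. g r (Im z * cos \<theta> - Re z * sin \<theta>)) has_real_derivative
      gp r (Im z * cos \<theta> - Re z * sin \<theta>) * (- (Im z * sin \<theta>) - Re z * cos \<theta>)) (at \<theta>)"
    using DERIV_chain2[OF g_deriv[OF assms(1) y] dY] unfolding gp_def .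
  have "((\<lambda>\<theta>. (Re z * cos \<theta> + Im z * sin \<theta>) - g r (Im z * cos \<theta> - Re z * sin \<theta>)) has_real_derivative
     (- (Re z * sin \<theta>) + Im z * cos \<theta>) - gp r (Im z * cos \<theta> - Re z * sin \<theta>) * (- (Im z * sin \<theta>) - Re z * cos \<theta>)) (at \<theta>)"
    by (rule DERIV_diff[OF dX dG])
  then show ?thesis unfolding feq reX imY by (simp add: algebra_simps)
qed

lemma gp_bound': "r \<ge> 64 \<Longrightarrow> \<bar>y\<bar> \<le> 2 \<Longrightarrow> \<bar>gp r y\<bar> \<le> 1/16"
  unfolding gp_def by (rule gp_bound)
lemma gp_lip': "r \<ge> 64 \<Longrightarrow> \<bar>y\<bar> \<le> 2 \<Longrightarrow> \<bar>y'\<bar> \<le> 2 \<Longrightarrow> \<bar>gp r y - gp r y'\<bar> \<le> \<bar>y - y'\<bar> / 8"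
  unfolding gp_def by (rule gp_lip)

lemma fine:
  fixes q q' :: complex
  assumes r: "r \<ge> 64" and q: "cmod q \<le> 3/2" and q': "cmod q' \<le> 3/2"
    and dpos: "cmod (q - q') > 0"
    and t12: "\<theta>1 \<le> \<theta>2" "\<theta>2 \<le> \<theta>1 + 1/4"
    and h1: "\<bar>P r \<theta>1 q - P r \<theta>1 q'\<bar> \<le> e" and h2: "\<bar>P r \<theta>2 q - P r \<theta>2 q'\<bar> \<le> e"
    and ed: "e \<le> cmod (q - q') / 4"
  shows "\<theta>2 - \<theta>1 \<le> 8 * e / cmod (q - q')"
proof -
  define d where "d = cmod (q - q')"
  have d0: "d > 0" using dpos d_def by simp
  define H where "H \<theta> = P r \<theta> q - P r \<theta> q'" for \<theta>
  define DX where "DX \<theta> = Re (cis (-\<theta>) * q) - Re (cis (-\<theta>) * q')" for \<theta>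
  define DY where "DY \<theta> = Im (cis (-\<theta>) * q) - Im (cis (-\<theta>) * q')" for \<theta>
  define Hd where "Hd \<theta> = DY \<theta> + (gp r (Im (cis (-\<theta>) * q)) * Re (cis (-\<theta>) * q)
                                 - gp r (Im (cis (-\<theta>) * q')) * Re (cis (-\<theta>) * q'))" for \<theta>
  have dH: "(H has_real_derivative Hd \<theta>) (at \<theta>)" for \<theta>
  proof -
    have "((\<lambda>\<theta>. P r \<theta> q - P r \<theta> q') has_real_derivative
       (Im (cis (-\<theta>) * q) + gp r (Im (cis (-\<theta>) * q)) * Re (cis (-\<theta>) * q)) -
       (Im (cis (-\<theta>) * q') + gp r (Im (cis (-\<theta>) * q')) * Re (cis (-\<theta>) * q'))) (at \<theta>)"
      by (rule DERIV_diff[OF P_deriv[OF r q] P_deriv[OF r q']])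
    then show ?thesis unfolding H_def[abs_def] Hd_def DY_def by (simp add: algebra_simps)
  qed
  have DXe: "DX \<theta> = Re (cis (-\<theta>) * (q - q'))" for \<theta> unfolding DX_def by (simp add: algebra_simps)
  have DYe: "DY \<theta> = Im (cis (-\<theta>) * (q - q'))" for \<theta> unfolding DY_def by (simp add: algebra_simps)
  have DXb: "\<bar>DX \<theta>\<bar> \<le> d" for \<theta> unfolding DXe d_def by (rule reX_bd)
  have DYb: "\<bar>DY \<theta>\<bar> \<le> d" for \<theta> unfolding DYe d_def by (rule imY_bd)
  have pyth: "(DX \<theta>)\<^sup>2 + (DY \<theta>)\<^sup>2 = d\<^sup>2" for \<theta>
  proof -
    have "(DX \<theta>)\<^sup>2 + (DY \<theta>)\<^sup>2 = (cmod (cis (-\<theta>) * (q - q')))\<^sup>2"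
      unfolding DXe DYe by (simp add: cmod_power2)
    also have "\<dots> = d\<^sup>2" unfolding d_def by (simp add: norm_mult)
    finally show ?thesis .
  qed
  have pert: "\<bar>gp r (Im (cis (-\<theta>) * q)) * Re (cis (-\<theta>) * q) - gp r (Im (cis (-\<theta>) * q')) * Re (cis (-\<theta>) * q')\<bar> \<le> d/4" for \<theta>
  proof -
    define A where "A = gp r (Im (cis (-\<theta>) * q))"
    define A' where "A' = gp r (Im (cis (-\<theta>) * q'))"
    define X where "X = Re (cis (-\<theta>) * q)"
    define X' where "X' = Re (cis (-\<theta>) * q')"
    have y1: "\<bar>Im (cis (-\<theta>) * q)\<bar> \<le> 2" using imY_bd[of \<theta> q] q by linarith
    have y2: "\<bar>Im (cis (-\<theta>) * q')\<bar> \<le> 2" using imY_bd[of \<theta> q'] q' by linarith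
    have Ab: "\<bar>A\<bar> \<le> 1/16" unfolding A_def by (rule gp_bound'[OF r y1])
    have "\<bar>Im (cis (-\<theta>) * q) - Im (cis (-\<theta>) * q')\<bar> / 8 \<le> d/8" using DYb[of \<theta>] unfolding DY_def by simp
    then have AA: "\<bar>A - A'\<bar> \<le> d/8" using gp_lip'[OF r y1 y2] unfolding A_def A'_def by (rule order_trans[rotated])
    have X'b: "\<bar>X'\<bar> \<le> 3/2" using reX_bd[of \<theta> q'] q' unfolding X'_def by linarith
    have XX: "\<bar>X - X'\<bar> \<le> d" using DXb[of \<theta>] unfolding X_def X'_def DX_def .
    have "A * X - A' * X' = A * (X - X') + X' * (A - A')" by (simp add: algebra_simps)
    then have "\<bar>A * X - A' * X'\<bar> \<le> \<bar>A\<bar> * \<bar>X - X'\<bar> + \<bar>X'\<bar> * \<bar>A - A'\<bar>"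
      by (simp add: abs_mult[symmetric] abs_triangle_ineq)
    also have "\<dots> \<le> 1/16 * d + 3/2 * (d/8)"
      by (intro add_mono mult_mono Ab XX X'b AA) auto
    finally show ?thesis unfolding A_def A'_def X_def X'_def by simp
  qed
  have gdiff: "\<bar>H \<theta>1 - DX \<theta>1\<bar> \<le> d/16"
  proof -
    have y1: "\<bar>Im (cis (-\<theta>1) * q)\<bar> \<le> 2" using imY_bd[of \<theta>1 q] q by linarith
    have y2: "\<bar>Im (cis (-\<theta>1) * q')\<bar> \<le> 2" using imY_bd[of \<theta>1 q'] q' by linarith
    define Y where "Y = Im (cis (-\<theta>1) * q)"
    define Y' where "Y' = Im (cis (-\<theta>1) * q')"
    have e: "H \<theta>1 - DX \<theta>1 = - (g r Y - g r Y')"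
      unfolding H_def DX_def P_g[OF q] P_g[OF q'] Y_def Y'_def by simp
    have gl: "\<bar>g r Y - g r Y'\<bar> \<le> \<bar>Y - Y'\<bar> / 16" using g_lip[OF r y1 y2] unfolding Y_def Y'_def .
    have "\<bar>Y - Y'\<bar> \<le> d" using DYb[of \<theta>1] unfolding DY_def Y_def Y'_def .
    then have d16: "\<bar>Y - Y'\<bar> / 16 \<le> d / 16" by simp
    have "\<bar>H \<theta>1 - DX \<theta>1\<bar> = \<bar>g r Y - g r Y'\<bar>" by (simp only: e abs_minus_cancel)
    also have "\<dots> \<le> d / 16" using gl d16 by (rule order_trans)
    finally show ?thesis .
  qed
  have X1: "\<bar>DX \<theta>1\<bar> \<le> 5*d/16" using gdiff h1 ed unfolding H_def d_def[symmetric] by linarith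
  have dx2: "(DX \<theta>1)\<^sup>2 \<le> (5*d/16)\<^sup>2"
    using power_mono[OF X1, of 2] by simp
  have Y1sq: "(DY \<theta>1)\<^sup>2 \<ge> (9*d/10)\<^sup>2"
  proof -
    have "(5*d/16)\<^sup>2 = 25/256 * d\<^sup>2" "(9*d/10)\<^sup>2 = 81/100 * d\<^sup>2" by (simp_all add: power2_eq_square)
    moreover have "d\<^sup>2 \<ge> 0" by simp
    ultimately show ?thesis using pyth[of \<theta>1] dx2 by linarith
  qed
  obtain \<sigma> :: real where sg: "\<sigma> = 1 \<or> \<sigma> = -1" and Y1: "\<sigma> * DY \<theta>1 \<ge> 9*d/10"
  proof (cases "DY \<theta>1 \<ge> 0")
    case True
    have "DY \<theta>1 \<ge> 9*d/10"
    proof (rule ccontr)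
      assume "\<not> ?thesis"
      then have "(DY \<theta>1)\<^sup>2 < (9*d/10)\<^sup>2" using True by (intro power_strict_mono) auto
      then show False using Y1sq by simp
    qed
    then show ?thesis using that[of 1] by simp
  next
    case False
    have "- DY \<theta>1 \<ge> 9*d/10"
    proof (rule ccontr)
      assume "\<not> ?thesis"
      then have "(- DY \<theta>1)\<^sup>2 < (9*d/10)\<^sup>2" using False by (intro power_strict_mono) auto
      then show False using Y1sq by simp
    qed
    then show ?thesis using that[of "-1"] by simp
  qed
  have sabs: "\<bar>\<sigma> * x\<bar> = \<bar>x\<bar>" for x using sg by auto
  have slope: "\<sigma> * Hd \<theta> \<ge> d/4" if th: "\<theta>1 \<le> \<theta>" "\<theta> \<le> \<theta>2" for \<theta>
  proof -
    define \<alpha> where "\<alpha> = \<theta> - \<theta>1"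
    have a0: "0 \<le> \<alpha>" and a1: "\<alpha> \<le> 1/4" using th t12 unfolding \<alpha>_def by auto
    have th_eq: "\<theta> = \<theta>1 + \<alpha>" unfolding \<alpha>_def by simp
    have rot: "DY \<theta> = DY \<theta>1 * cos \<alpha> - DX \<theta>1 * sin \<alpha>"
      unfolding DYe DXe imY reX th_eq cos_add sin_add by (simp add: algebra_simps)
    have s0: "0 \<le> sin \<alpha>" using a0 a1 pi_gt3 by (intro sin_ge_zero) auto
    have s1: "sin \<alpha> \<le> 1/4" using sin_x_le_x[OF a0] a1 by linarith
    have c0: "0 \<le> cos \<alpha>" using a0 a1 pi_gt3 by (intro cos_ge_zero) auto
    have "(sin \<alpha>)\<^sup>2 \<le> (1/4)\<^sup>2" using power_mono[OF s1 s0, of 2] .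
    then have "(cos \<alpha>)\<^sup>2 \<ge> (24/25)\<^sup>2" using sin_cos_squared_add[of \<alpha>] by (simp add: power2_eq_square)
    then have c1: "cos \<alpha> \<ge> 24/25"
      by (rule power2_le_imp_le[OF _ c0])
    have "\<sigma> * DY \<theta> = (\<sigma> * DY \<theta>1) * cos \<alpha> - (\<sigma> * DX \<theta>1) * sin \<alpha>" unfolding rot by (simp add: algebra_simps)
    moreover have "(\<sigma> * DY \<theta>1) * cos \<alpha> \<ge> (9*d/10) * (24/25)"
      using Y1 c1 d0 by (intro mult_mono) auto
    moreover have "(\<sigma> * DX \<theta>1) * sin \<alpha> \<le> (5*d/16) * (1/4)"
    proof -
      have "(\<sigma> * DX \<theta>1) * sin \<alpha> \<le> \<bar>\<sigma> * DX \<theta>1\<bar> * sin \<alpha>" using s0 by (intro mult_right_mono) auto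
      also have "\<dots> \<le> (5*d/16) * (1/4)" using X1 s0 s1 d0 unfolding sabs by (intro mult_mono) auto
      finally show ?thesis .
    qed
    ultimately have DYth: "\<sigma> * DY \<theta> \<ge> 3*d/4" using d0 by linarith
    have "\<sigma> * Hd \<theta> = \<sigma> * DY \<theta> + \<sigma> * (gp r (Im (cis (-\<theta>) * q)) * Re (cis (-\<theta>) * q)
                                 - gp r (Im (cis (-\<theta>) * q')) * Re (cis (-\<theta>) * q'))"
      unfolding Hd_def by (simp add: algebra_simps)
    moreover have "\<bar>\<sigma> * (gp r (Im (cis (-\<theta>) * q)) * Re (cis (-\<theta>) * q)
                                 - gp r (Im (cis (-\<theta>) * q')) * Re (cis (-\<theta>) * q'))\<bar> \<le> d/4"
      unfolding sabs by (rule pert)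
    ultimately show ?thesis using DYth by linarith
  qed
  show ?thesis
  proof (cases "\<theta>1 < \<theta>2")
    case False
    then have "\<theta>2 - \<theta>1 = 0" using t12 by simp
    moreover have "e \<ge> 0" using h1 by linarith
    moreover have "8 * e / cmod (q - q') \<ge> 0" using \<open>e \<ge> 0\<close> by simp
    ultimately show ?thesis by linarith
  next
    case True
    obtain \<xi> where xi: "\<theta>1 < \<xi>" "\<xi> < \<theta>2" "H \<theta>2 - H \<theta>1 = (\<theta>2 - \<theta>1) * Hd \<xi>"
      using MVT2[OF True, of H Hd] dH by blast
    have "(\<theta>2 - \<theta>1) * (d/4) \<le> (\<theta>2 - \<theta>1) * (\<sigma> * Hd \<xi>)"
      using slope[of \<xi>] xi True by (intro mult_left_mono) auto
    also have "\<dots> = \<sigma> * (H \<theta>2 - H \<theta>1)" unfolding xi(3) by (simp add: algebra_simps)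
    also have "\<dots> \<le> \<bar>\<sigma> * (H \<theta>2 - H \<theta>1)\<bar>" by simp
    also have "\<dots> \<le> 2 * e" unfolding sabs using h1 h2 unfolding H_def by linarith
    finally have "(\<theta>2 - \<theta>1) * d \<le> 8 * e" by simp
    then have "\<theta>2 - \<theta>1 \<le> 8 * e / d" using d0 by (simp add: pos_le_divide_eq)
    then show ?thesis unfolding d_def .
  qed
qed

lemma cover_interval:
  fixes S :: "real set"
  assumes "\<And>x y. x \<in> S \<Longrightarrow> y \<in> S \<Longrightarrow> \<bar>x - y\<bar> \<le> D"
  shows "\<exists>a. S \<subseteq> {a..a + D}"
proof (cases "S = {}")
  case True then show ?thesis by auto
next
  case False
  then obtain x0 where x0: "x0 \<in> S" by auto
  have bdd: "bdd_below S"
    by (rule bdd_belowI[of _ "x0 - D"]) (use assms x0 in force)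
  have "S \<subseteq> {Inf S..Inf S + D}"
  proof
    fix y assume y: "y \<in> S"
    have "Inf S \<le> y" using bdd y by (rule cInf_lower[rotated])
    moreover have "y - D \<le> Inf S"
      by (rule cInf_greatest[OF False]) (use assms y in force)
    ultimately show "y \<in> {Inf S..Inf S + D}" by auto
  qed
  then show ?thesis by blast
qed

lemma int_crude:
  assumes "\<And>\<theta>. emeasure lebesgue (S \<theta>) \<le> ennreal W" "W \<ge> 0"
  shows "(\<integral>\<^sup>+ \<theta>. indicator {0..2*pi} \<theta> * emeasure lebesgue (S \<theta>) \<partial>lborel) \<le> ennreal (W * (2*pi))"
proof -
  have "(\<integral>\<^sup>+ \<theta>. indicator {0..2*pi} \<theta> * emeasure lebesgue (S \<theta>) \<partial>lborel)
      \<le> (\<integral>\<^sup>+ \<theta>. ennreal W * indicator {0..2*pi} \<theta> \<partial>lborel)"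
  proof (rule nn_integral_mono)
    fix \<theta> show "indicator {0..2*pi} \<theta> * emeasure lebesgue (S \<theta>) \<le> ennreal W * indicator {0..2*pi} \<theta>"
      using assms(1)[of \<theta>] by (cases "\<theta> \<in> {0..2*pi}") (auto simp: mult.commute)
  qed
  also have "\<dots> = ennreal W * emeasure lborel {0..2*pi}"
    by (rule nn_integral_cmult_indicator) simp
  also have "\<dots> = ennreal (W * (2*pi))" using assms(2) by (simp add: ennreal_mult)
  finally show ?thesis .
qed

lemma int_fine:
  assumes "\<And>\<theta>. emeasure lebesgue (S \<theta>) \<le> ennreal W" "W \<ge> 0" "D \<ge> 0"
    and cov: "\<And>\<theta>. \<theta> \<in> {0..2*pi} \<Longrightarrow> S \<theta> \<noteq> {} \<Longrightarrow> \<exists>i<N. \<theta> \<in> {a i..a i + D}"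
  shows "(\<integral>\<^sup>+ \<theta>. indicator {0..2*pi} \<theta> * emeasure lebesgue (S \<theta>) \<partial>lborel) \<le> ennreal (W * (real N * D))"
proof -
  have "(\<integral>\<^sup>+ \<theta>. indicator {0..2*pi} \<theta> * emeasure lebesgue (S \<theta>) \<partial>lborel)
      \<le> (\<integral>\<^sup>+ \<theta>. ennreal W * (\<Sum>i<N. indicator {a i..a i + D} \<theta>) \<partial>lborel)"
  proof (rule nn_integral_mono)
    fix \<theta>
    show "indicator {0..2*pi} \<theta> * emeasure lebesgue (S \<theta>) \<le> ennreal W * (\<Sum>i<N. indicator {a i..a i + D} \<theta>)"
    proof (cases "\<theta> \<in> {0..2*pi} \<and> S \<theta> \<noteq> {}")
      case False then show ?thesis by auto
    next
      case True
      then obtain i where i: "i < N" "\<theta> \<in> {a i..a i + D}" using cov by blast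
      have "(1::ennreal) = indicator {a i..a i + D} \<theta>" using i by simp
      also have "\<dots> \<le> (\<Sum>i<N. indicator {a i..a i + D} \<theta>)"
        by (rule member_le_sum) (use i in auto)
      finally have "1 \<le> (\<Sum>i<N. indicator {a i..a i + D} \<theta> :: ennreal)" .
      then have "ennreal W * 1 \<le> ennreal W * (\<Sum>i<N. indicator {a i..a i + D} \<theta>)"
        by (rule mult_left_mono) simp
      moreover have "indicator {0..2*pi} \<theta> * emeasure lebesgue (S \<theta>) \<le> ennreal W"
        using True assms(1)[of \<theta>] by simp
      ultimately show ?thesis by simp
    qed
  qed
  also have "\<dots> = ennreal W * (\<integral>\<^sup>+ \<theta>. (\<Sum>i<N. indicator {a i..a i + D} \<theta>) \<partial>lborel)"
    by (rule nn_integral_cmult) measurable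
  also have "(\<integral>\<^sup>+ \<theta>. (\<Sum>i<N. indicator {a i..a i + D} \<theta>) \<partial>lborel) = (\<Sum>i<N. emeasure lborel {a i..a i + D})"
    by (subst nn_integral_sum) (auto simp: nn_integral_indicator)
  also have "\<dots> = (\<Sum>i<N. ennreal D)" using assms(3) by simp
  also have "\<dots> = ennreal (real N * D)" using assms(3) by (simp add: ennreal_of_nat_eq_real_of_nat ennreal_mult)
  finally show ?thesis using assms by (simp add: ennreal_mult)
qed

lemma pow_eq: "4 powr (real_of_int k - 2 * real n) = 4 powr (real_of_int k) * ((1/4::real)^n)^2"
proof -
  have a: "4 powr (2 * real n) = (4::real)^(2*n)"
    using powr_realpow[of 4 "2*n"] by simp
  have b: "((1/4::real)^n)^2 = 1 / 4^(2*n)"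
    by (simp add: power_one_over power_mult[symmetric] mult.commute)
  show ?thesis unfolding powr_diff a b by simp
qed

lemma pow_k: "4 powr (- real_of_int k - 1) = 1 / (4 * 4 powr (real_of_int k))"
  unfolding powr_diff powr_minus_divide by simp

lemma rc_norm: "cmod (rc z) = cmod z" unfolding rc_def by (simp add: norm_mult)
lemma rc_diff: "rc z - rc w = rc (z - w)" unfolding rc_def by (simp add: algebra_simps)

lemma unit_norm: assumes "0 \<le> x" "x \<le> 1" "0 \<le> y" "y \<le> 1" shows "cmod (Complex x y) \<le> 3/2"
proof -
  have "x\<^sup>2 \<le> 1" "y\<^sup>2 \<le> 1" using assms by (simp_all add: power_le_one)
  then have "x\<^sup>2 + y\<^sup>2 \<le> (3/2)\<^sup>2" by (simp add: power2_eq_square)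
  then have "sqrt (x\<^sup>2 + y\<^sup>2) \<le> sqrt ((3/2)\<^sup>2)" by (rule real_sqrt_le_mono)
  then show ?thesis by (simp add: complex_norm)
qed

lemma sq_facts:
  fixes s :: real
  assumes A: "0 \<le> a" "b \<le> 1" "b - a = s" and C: "0 \<le> c" "d \<le> 1" "d - c = s" and p: "0 \<le> s"
  shows "cmod (rc (Complex ((a+b)/2) ((c+d)/2))) \<le> 3/2"
    and "\<And>z. z \<in> rc ` sq a b c d \<Longrightarrow> cmod z \<le> 3/2 \<and> cmod (z - rc (Complex ((a+b)/2) ((c+d)/2))) \<le> s"
proof -
  show "cmod (rc (Complex ((a+b)/2) ((c+d)/2))) \<le> 3/2"
  proof -
    have "0 \<le> a + b" "a + b \<le> 2" "0 \<le> c + d" "c + d \<le> 2" using A C p by linarith+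
    then have "0 \<le> (a + b) / 2" "(a + b) / 2 \<le> 1" "0 \<le> (c + d) / 2" "(c + d) / 2 \<le> 1" by simp_all
    then show ?thesis unfolding rc_norm by (rule unit_norm)
  qed
  fix z assume "z \<in> rc ` sq a b c d"
  then obtain w where w: "z = rc w" "Re w \<in> {a..b}" "Im w \<in> {c..d}" unfolding sq_def by auto
  have "cmod w \<le> 3/2"
  proof -
    have "w = Complex (Re w) (Im w)" by simp
    also have "cmod \<dots> \<le> 3/2" using w A C p by (intro unit_norm) auto
    finally show ?thesis .
  qed
  moreover have "cmod (w - Complex ((a+b)/2) ((c+d)/2)) \<le> s"
  proof -
    have "cmod (w - Complex ((a+b)/2) ((c+d)/2)) \<le> \<bar>Re w - (a+b)/2\<bar> + \<bar>Im w - (c+d)/2\<bar>"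
      using cmod_le[of "w - Complex ((a+b)/2) ((c+d)/2)"] by simp
    also have "\<dots> \<le> s"
    proof -
      have w1: "a \<le> Re w" "Re w \<le> b" "c \<le> Im w" "Im w \<le> d" using w by auto
      have "\<bar>Re w - (a + b) / 2\<bar> \<le> (b - a) / 2" unfolding abs_le_iff using w1 by (simp add: field_simps)
      moreover have "\<bar>Im w - (c + d) / 2\<bar> \<le> (d - c) / 2" unfolding abs_le_iff using w1 by (simp add: field_simps)
      ultimately show ?thesis using A C by simp
    qed
    finally show ?thesis .
  qed
  ultimately show "cmod z \<le> 3/2 \<and> cmod (z - rc (Complex ((a+b)/2) ((c+d)/2))) \<le> s"
    unfolding w(1) rc_norm rc_diff by simp
qed

lemma sigma_diff: "\<bar>Im (sigma r \<theta> q) - Im (sigma r \<theta> q')\<bar> \<le> \<bar>P r \<theta> q - P r \<theta> q'\<bar> + \<bar>Im (cis (-\<theta>) * q) - Im (cis (-\<theta>) * q')\<bar>"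
proof -
  have e: "sigma r \<theta> q - sigma r \<theta> q' = cis \<theta> * Complex (P r \<theta> q - P r \<theta> q') (Im (cis (-\<theta>) * q) - Im (cis (-\<theta>) * q'))"
    unfolding sigma_def sigma0_def P_def by (simp add: algebra_simps complex_eq_iff)
  have "\<bar>Im (sigma r \<theta> q) - Im (sigma r \<theta> q')\<bar> = \<bar>Im (sigma r \<theta> q - sigma r \<theta> q')\<bar>" by simp
  also have "\<dots> \<le> cmod (sigma r \<theta> q - sigma r \<theta> q')" by (rule abs_Im_le_cmod)
  also have "\<dots> = cmod (Complex (P r \<theta> q - P r \<theta> q') (Im (cis (-\<theta>) * q) - Im (cis (-\<theta>) * q')))"
    unfolding e by (simp add: norm_mult)
  also have "\<dots> \<le> \<bar>P r \<theta> q - P r \<theta> q'\<bar> + \<bar>Im (cis (-\<theta>) * q) - Im (cis (-\<theta>) * q')\<bar>"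
    using cmod_le[of "Complex (P r \<theta> q - P r \<theta> q') (Im (cis (-\<theta>) * q) - Im (cis (-\<theta>) * q'))"]
    by (simp only: complex.sel)
  finally show ?thesis .
qed

lemma P_small: assumes "r > 0" "cmod z \<le> 3/2" shows "P r \<theta> z \<in> {-6..2}"
proof -
  have y: "\<bar>Im (cis (-\<theta>) * z)\<bar> \<le> 2" using imY_bd[of \<theta> z] assms by linarith
  have x: "\<bar>Re (cis (-\<theta>) * z)\<bar> \<le> 3/2" using reX_bd[of \<theta> z] assms by linarith
  define X where "X = Re (cis (-\<theta>) * z)"
  define Y where "Y = Im (cis (-\<theta>) * z)"
  have e: "P r \<theta> z = X - f_r r Y" unfolding P_def X_def Y_def by simp
  have xa: "\<bar>X\<bar> \<le> 3/2" using x unfolding X_def .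
  have "0 \<le> f_r r Y" "f_r r Y \<le> 4" using fr_bounds[OF assms(1) y] unfolding Y_def by auto
  moreover have "-3/2 \<le> X" "X \<le> 3/2" using xa unfolding abs_le_iff by linarith+
  ultimately show ?thesis unfolding e by simp
qed

lemma main_bound:
  assumes rn: "r \<ge> 4 powr (real n / 5)" and A: "(Q, Q') \<in> A_set n r j k"
  shows "rho r Q Q' \<le> ennreal (4^34 * 4 powr (real_of_int k - 2 * real n))"
proof -
  from A obtain a b c d a' b' c' d' \<theta>0 where
      I1: "(a, b) \<in> cantor_intervals n" and I2: "(c, d) \<in> cantor_intervals n"
      and I3: "(a', b') \<in> cantor_intervals n" and I4: "(c', d') \<in> cantor_intervals n"
      and QQ: "Q = sq a b c d" "Q' = sq a' b' c' d'"
      and W: "4 powr (- real_of_int k - 1) \<le> \<bar>Im (sigma r \<theta>0 (rc (Complex ((a + b) / 2) ((c + d) / 2))))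
                 - Im (sigma r \<theta>0 (rc (Complex ((a' + b') / 2) ((c' + d') / 2))))\<bar>"
    unfolding A_set_def Let_def by blast
  define s where "s = (1/4::real)^n"
  have s0: "s > 0" by (simp add: s_def)
  have s0': "s \<ge> 0" using s0 by simp
  have c1: "0 \<le> a" "b \<le> 1" "b - a = s" using cantor_props[OF I1] s_def by auto
  have c2: "0 \<le> c" "d \<le> 1" "d - c = s" using cantor_props[OF I2] s_def by auto
  have c3: "0 \<le> a'" "b' \<le> 1" "b' - a' = s" using cantor_props[OF I3] s_def by auto
  have c4: "0 \<le> c'" "d' \<le> 1" "d' - c' = s" using cantor_props[OF I4] s_def by auto
  define q where "q = rc (Complex ((a + b) / 2) ((c + d) / 2))"
  define q' where "q' = rc (Complex ((a' + b') / 2) ((c' + d') / 2))"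
  define Z where "Z = rc ` Q"
  define Z' where "Z' = rc ` Q'"
  have hq: "cmod q \<le> 3/2" unfolding q_def by (rule sq_facts(1)[OF c1 c2 s0'])
  have hq': "cmod q' \<le> 3/2" unfolding q'_def by (rule sq_facts(1)[OF c3 c4 s0'])
  have hZ: "cmod z \<le> 3/2 \<and> cmod (z - q) \<le> s" if "z \<in> Z" for z
    using sq_facts(2)[OF c1 c2 s0'] that unfolding Z_def QQ q_def by blast
  have hZ': "cmod z \<le> 3/2 \<and> cmod (z - q') \<le> s" if "z \<in> Z'" for z
    using sq_facts(2)[OF c3 c4 s0'] that unfolding Z'_def QQ q'_def by blast
  define S where "S \<theta> = P r \<theta> ` Z \<inter> P r \<theta> ` Z'" for \<theta>
  have rho_eq: "rho r Q Q' = (\<integral>\<^sup>+ \<theta>. indicator {0..2*pi} \<theta> * emeasure lebesgue (S \<theta>) \<partial>lborel)"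
    unfolding rho_def proj_sigma S_def Z_def Z'_def ..
  define K where "K = 4 powr (real_of_int k)"
  have K0: "K > 0" unfolding K_def by simp
  have W': "1 / (4 * K) \<le> \<bar>Im (sigma r \<theta>0 q) - Im (sigma r \<theta>0 q')\<bar>"
    using W unfolding pow_k K_def q_def q'_def .
  have target: "4^34 * 4 powr (real_of_int k - 2 * real n) = 4^34 * (K * s\<^sup>2)"
    unfolding pow_eq K_def s_def by simp
  have r0: "r > 0" using rn by (smt (verit) powr_gt_zero)
  have SD: "\<bar>Im (sigma r \<theta>0 q) - Im (sigma r \<theta>0 q')\<bar> \<le> \<bar>P r \<theta>0 q - P r \<theta>0 q'\<bar> + \<bar>Im (cis (-\<theta>0) * q) - Im (cis (-\<theta>0) * q')\<bar>"
    by (rule sigma_diff)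
  have X: "rho r Q Q' \<le> ennreal (4^34 * (K * s\<^sup>2))"
  proof (cases "r < 64")
    case True
    have "(4::real) powr (real n / 5) < 4 powr 3" using rn True by simp
    then have "real n / 5 < 3" by (rule powr_less_cancel) simp
    then have "real n < 15" by simp
    then have n14: "n \<le> 14" by simp
    have s14: "(1/4::real)^14 \<le> s" unfolding s_def by (rule power_decreasing) (use n14 in auto)
    have pq: "P r \<theta>0 q \<in> {-6..2}" by (rule P_small[OF r0 hq])
    have pq': "P r \<theta>0 q' \<in> {-6..2}" by (rule P_small[OF r0 hq'])
    have iq: "\<bar>Im (cis (-\<theta>0) * q)\<bar> \<le> 3/2" using imY_bd[of \<theta>0 q] hq by linarith
    have iq': "\<bar>Im (cis (-\<theta>0) * q')\<bar> \<le> 3/2" using imY_bd[of \<theta>0 q'] hq' by linarith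
    have "\<bar>P r \<theta>0 q - P r \<theta>0 q'\<bar> \<le> 8" using pq pq' by (auto simp: abs_le_iff)
    moreover have "\<bar>Im (cis (-\<theta>0) * q) - Im (cis (-\<theta>0) * q')\<bar> \<le> 3" using abs_triangle_ineq4[of "Im (cis (-\<theta>0) * q)" "Im (cis (-\<theta>0) * q')"] iq iq' by linarith
    ultimately have "1 / (4 * K) \<le> 11" using W' SD by linarith
    then have K44: "1/44 \<le> K" using K0 by (simp add: field_simps)
    have Sm: "emeasure lebesgue (S \<theta>) \<le> ennreal 8" for \<theta>
    proof -
      have "S \<theta> \<subseteq> {-6..2}" unfolding S_def using P_small[OF r0] hZ by blast
      then have "emeasure lebesgue (S \<theta>) \<le> emeasure lebesgue {-6..(2::real)}" by (rule emeasure_mono) simp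
      then show ?thesis by simp
    qed
    have "rho r Q Q' \<le> ennreal (8 * (2*pi))" unfolding rho_eq by (rule int_crude[OF Sm]) simp
    also have "\<dots> \<le> ennreal (4^34 * (K * s\<^sup>2))"
    proof (rule ennreal_leI)
      have "8 * (2*pi) \<le> 64" using pi_less_4 by simp
      also have "(64::real) \<le> 4^34 * (1/44 * ((1/4)^14)\<^sup>2)" by (simp add: power_one_over)
      also have "(1/44 * ((1/4::real)^14)\<^sup>2) \<le> K * s\<^sup>2"
        using K44 s14 by (intro mult_mono power_mono) auto
      then have "4^34 * (1/44 * ((1/4::real)^14)\<^sup>2) \<le> 4^34 * (K * s\<^sup>2)" by simp
      finally show "8 * (2*pi) \<le> 4^34 * (K * s\<^sup>2)" .
    qed
    finally show ?thesis .
  next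
    case False
    then have r64: "r \<ge> 64" by simp
    have near: "\<bar>P r \<theta> z - P r \<theta> q\<bar> \<le> 2 * s" if "cmod z \<le> 3/2" "cmod (z - q) \<le> s" for \<theta> z
    proof -
      have "\<bar>P r \<theta> z - P r \<theta> q\<bar> \<le> 17/16 * cmod (z - q)" by (rule P_lip[OF r64 that(1) hq])
      also have "\<dots> \<le> 2 * s" using that(2) s0 by simp
      finally show ?thesis .
    qed
    have near': "\<bar>P r \<theta> z - P r \<theta> q'\<bar> \<le> 2 * s" if "cmod z \<le> 3/2" "cmod (z - q') \<le> s" for \<theta> z
    proof -
      have "\<bar>P r \<theta> z - P r \<theta> q'\<bar> \<le> 17/16 * cmod (z - q')" by (rule P_lip[OF r64 that(1) hq'])
      also have "\<dots> \<le> 2 * s" using that(2) s0 by simp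
      finally show ?thesis .
    qed
    have Sm: "emeasure lebesgue (S \<theta>) \<le> ennreal (4 * s)" for \<theta>
    proof -
      have "S \<theta> \<subseteq> {P r \<theta> q - 2 * s..P r \<theta> q + 2 * s}"
      proof
        fix x assume "x \<in> S \<theta>"
        then obtain z where z: "z \<in> Z" "x = P r \<theta> z" unfolding S_def by auto
        have "\<bar>x - P r \<theta> q\<bar> \<le> 2 * s" using near[of z \<theta>] hZ[OF z(1)] z(2) by simp
        then show "x \<in> {P r \<theta> q - 2 * s..P r \<theta> q + 2 * s}" unfolding abs_le_iff by simp
      qed
      then have "emeasure lebesgue (S \<theta>) \<le> emeasure lebesgue {P r \<theta> q - 2 * s..P r \<theta> q + 2 * s}"
        by (rule emeasure_mono) simp
      also have "\<dots> = ennreal (4 * s)" using s0 by simp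
      finally show ?thesis .
    qed
    have bad: "\<bar>P r \<theta> q - P r \<theta> q'\<bar> \<le> 4 * s" if ne: "S \<theta> \<noteq> {}" for \<theta>
    proof -
      obtain x where "x \<in> S \<theta>" using ne by blast
      then obtain z z' where z: "z \<in> Z" "x = P r \<theta> z" and z': "z' \<in> Z'" "x = P r \<theta> z'" unfolding S_def by auto
      have "\<bar>P r \<theta> z - P r \<theta> q\<bar> \<le> 2 * s" using near hZ[OF z(1)] by blast
      moreover have "\<bar>P r \<theta> z' - P r \<theta> q'\<bar> \<le> 2 * s" using near' hZ'[OF z'(1)] by blast
      ultimately show ?thesis using z(2) z'(2) by linarith
    qed
    define dd where "dd = cmod (q - q')"
    have "\<bar>P r \<theta>0 q - P r \<theta>0 q'\<bar> \<le> 17/16 * dd" unfolding dd_def by (rule P_lip[OF r64 hq hq'])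
    moreover have "\<bar>Im (cis (-\<theta>0) * q) - Im (cis (-\<theta>0) * q')\<bar> \<le> dd"
    proof -
      have "Im (cis (-\<theta>0) * q) - Im (cis (-\<theta>0) * q') = Im (cis (-\<theta>0) * (q - q'))" by (simp add: algebra_simps)
      then show ?thesis unfolding dd_def using imY_bd by metis
    qed
    ultimately have "1 / (4 * K) \<le> 3 * dd" using W' SD by linarith
    then have Kd: "1 \<le> 12 * K * dd" using K0 by (simp add: field_simps)
    then have dd0: "dd > 0" using K0 by (smt (verit) mult_nonneg_nonpos)
    show ?thesis
    proof (cases "dd < 16 * s")
      case True
      have "rho r Q Q' \<le> ennreal (4 * s * (2*pi))" unfolding rho_eq by (rule int_crude[OF Sm]) (use s0 in simp)
      also have "\<dots> \<le> ennreal (4^34 * (K * s\<^sup>2))"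
      proof (rule ennreal_leI)
        have "4 * s * (2*pi) \<le> 32 * s" using pi_less_4 s0 by simp
        also have "s \<le> 192 * K * s\<^sup>2"
        proof -
          have "s * 1 \<le> s * (12 * K * dd)" using Kd s0 by (intro mult_left_mono) auto
          also have "\<dots> \<le> s * (12 * K * (16 * s))" using True K0 s0 by (intro mult_left_mono) auto
          finally show ?thesis by (simp add: power2_eq_square algebra_simps)
        qed
        then have "32 * s \<le> 32 * (192 * K * s\<^sup>2)" by simp
        also have "\<dots> \<le> 4^34 * (K * s\<^sup>2)" using K0 by simp
        finally show "4 * s * (2*pi) \<le> 4^34 * (K * s\<^sup>2)" .
      qed
      finally show ?thesis .
    next
      case False
      then have ds: "16 * s \<le> dd" by simp
      define D where "D = 8 * (4 * s) / dd"
      have D0: "D \<ge> 0" unfolding D_def using s0 dd0 by simp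
      have pair: "\<bar>\<theta>1 - \<theta>2\<bar> \<le> D" if "S \<theta>1 \<noteq> {}" "S \<theta>2 \<noteq> {}" "\<bar>\<theta>1 - \<theta>2\<bar> \<le> 1/4" for \<theta>1 \<theta>2
      proof -
        have e4: "4 * s \<le> cmod (q - q') / 4" using ds unfolding dd_def by simp
        have dp: "cmod (q - q') > 0" using dd0 unfolding dd_def .
        show ?thesis
        proof (cases "\<theta>1 \<le> \<theta>2")
          case True
          have "\<theta>2 - \<theta>1 \<le> 8 * (4 * s) / cmod (q - q')"
            by (rule fine[OF r64 hq hq' dp True _ bad[OF that(1)] bad[OF that(2)] e4]) (use that(3) True in linarith)
          then show ?thesis using True unfolding D_def dd_def by simp
        next
          case False
          have "\<theta>1 - \<theta>2 \<le> 8 * (4 * s) / cmod (q - q')"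
            by (rule fine[OF r64 hq hq' dp _ _ bad[OF that(2)] bad[OF that(1)] e4]) (use that(3) False in linarith)+
          then show ?thesis using False unfolding D_def dd_def by simp
        qed
      qed
      define B where "B i = {\<theta>. S \<theta> \<noteq> {} \<and> real i / 4 \<le> \<theta> \<and> \<theta> \<le> real i / 4 + 1/4}" for i :: nat
      have "\<exists>a. B i \<subseteq> {a..a + D}" for i
      proof (rule cover_interval)
        fix x y assume x: "x \<in> B i" and y: "y \<in> B i"
        have h: "real i / 4 \<le> x" "x \<le> real i / 4 + 1/4" "real i / 4 \<le> y" "y \<le> real i / 4 + 1/4"
          "S x \<noteq> {}" "S y \<noteq> {}" using x y unfolding B_def by auto
        have "\<bar>x - y\<bar> \<le> 1/4" unfolding abs_le_iff using h(1-4) by linarith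
        then show "\<bar>x - y\<bar> \<le> D" by (rule pair[OF h(5) h(6)])
      qed
      then obtain aa where aa: "\<And>i. B i \<subseteq> {aa i..aa i + D}" by metis
      have cov: "\<exists>i<32. \<theta> \<in> {aa i..aa i + D}" if "\<theta> \<in> {0..2*pi}" "S \<theta> \<noteq> {}" for \<theta>
      proof -
        define i where "i = nat \<lfloor>4 * \<theta>\<rfloor>"
        have t0: "0 \<le> 4 * \<theta>" using that by simp
        have fi: "real i = of_int \<lfloor>4 * \<theta>\<rfloor>" unfolding i_def using t0 by simp
        have f1: "of_int \<lfloor>4 * \<theta>\<rfloor> \<le> 4 * \<theta>" by (rule of_int_floor_le)
        have f2: "4 * \<theta> < of_int \<lfloor>4 * \<theta>\<rfloor> + 1" by (rule real_of_int_floor_add_one_gt)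
        have "4 * \<theta> < 32" using that pi_less_4 by simp
        then have "real i < 32" using fi f1 by linarith
        then have i32: "i < 32" by simp
        have l1: "real i / 4 \<le> \<theta>" using fi f1 by linarith
        have l2: "\<theta> \<le> real i / 4 + 1/4" using fi f2 by linarith
        have "\<theta> \<in> B i" unfolding B_def using that(2) l1 l2 by blast
        then show ?thesis using aa[of i] i32 by blast
      qed
      have "rho r Q Q' \<le> ennreal (4 * s * (real 32 * D))" unfolding rho_eq
        by (rule int_fine[OF Sm _ D0 cov]) (use s0 in auto)
      also have "\<dots> \<le> ennreal (4^34 * (K * s\<^sup>2))"
      proof (rule ennreal_leI)
        have "4 * s * (real 32 * D) = 4096 * s\<^sup>2 * (1 / dd)" unfolding D_def using dd0
          by (simp add: power2_eq_square field_simps)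
        also have "1 / dd \<le> 12 * K" using Kd dd0 by (simp add: field_simps)
        then have "4096 * s\<^sup>2 * (1 / dd) \<le> 4096 * s\<^sup>2 * (12 * K)" by (intro mult_left_mono) auto
        also have "\<dots> \<le> 4^34 * (K * s\<^sup>2)" using K0 by simp
        finally show "4 * s * (real 32 * D) \<le> 4^34 * (K * s\<^sup>2)" .
      qed
      finally show ?thesis .
    qed
  qed
  then show ?thesis unfolding target .
qed

theorem lemma6:
  shows "\<exists>C>0. \<forall>n::nat. \<forall>r::real. \<forall>j k::int. \<forall>Q Q'.
     n \<ge> 1 \<longrightarrow> r \<ge> 4 powr (real n / 5) \<longrightarrow> (Q, Q') \<in> A_set n r j k \<longrightarrow>
     rho r Q Q' \<le> ennreal (C * 4 powr (real_of_int k - 2 * real n))"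
proof (rule exI[of _ "4^34"], intro conjI allI impI)
  show "(0::real) < 4^34" by simp
next
  fix n :: nat and r :: real and j k :: int and Q Q'
  assume "n \<ge> 1" "r \<ge> 4 powr (real n / 5)" "(Q, Q') \<in> A_set n r j k"
  then show "rho r Q Q' \<le> ennreal (4^34 * 4 powr (real_of_int k - 2 * real n))"
    using main_bound by blast
qed

end
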